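(* Let $m>3$ be such that a Steiner triple system $\mathrm{STS}(\mathcal M)$ on $\mathcal M$ exists. Then the hypergraph PIN model on $\mathcal H_{\mathrm{STS}}=(\mathcal M,\mathrm{STS}(\mathcal M))$ is strict Type $\mathcal S$.
   Context: Let $\mathcal M=\{1,\dots,m\}$. A Steiner triple system $\mathrm{STS}(\mathcal M)$ is a collection of 3-element subsets of $\mathcal M$ such that every 2-element subset of $\mathcal M$ is contained in exactly one member of the collection. A hypergraph PIN model on $\mathcal H=(\mathcal M,\mathcal E)$ is defined as follows. Let $\mathcal E^{(n)}$ contain $n$ copies of each hyperedge. Independent Bernoulli(1/2) variables $\xi_e$ are attached to the $e\in\mathcal E^{(n)}$, and $X^n_i=(\xi_e:e\in\mathcal E^{(n)},\ i\in e)$; the single-letter source $X_{\mathcal M}$ is the case $n=1$. Entropies are base 2. $\Delta(\mathcal P)=\frac1{|\mathcal P|-1}[\sum_{A\in\mathcal P}H(X_A)-H(X_{\mathcal M})]$ for partitions with at least 2 cells, where $X_A=(X_i:i\in A)$. The source is strict Type $\mathcal S$ if the singleton partition $\{\{1\},\dots,\{m\}\}$ is the unique minimizer of $\Delta$. *)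

theory Defs
  imports "HOL-Probability.Probability_Mass_Function" "HOL-Library.Disjoint_Sets"
begin

definition is_STS :: "nat set \<Rightarrow> nat set set \<Rightarrow> bool" where
  "is_STS M E \<longleftrightarrow> (\<forall>e\<in>E. e \<subseteq> M \<and> card e = 3) \<and>
     (\<forall>i\<in>M. \<forall>j\<in>M. i \<noteq> j \<longrightarrow> (\<exists>!e. e \<in> E \<and> {i, j} \<subseteq> e))"

text \<open>Single-letter hypergraph PIN source (n = 1): independent uniform bits xi_e,
  one per hyperedge e in E; the joint law of xi is uniform on the functions E -> bool.\<close>
definition pin_bits :: "nat set set \<Rightarrow> (nat set \<Rightarrow> bool) pmf" where
  "pin_bits E = pmf_of_set (PiE E (\<lambda>_. UNIV))"

definition pin_X :: "nat set set \<Rightarrow> nat \<Rightarrow> (nat set \<Rightarrow> bool) \<Rightarrow> (nat set \<Rightarrow> bool)" where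
  "pin_X E i xi = restrict xi {e \<in> E. i \<in> e}"

definition pin_XA :: "nat set set \<Rightarrow> nat set \<Rightarrow> (nat set \<Rightarrow> bool) \<Rightarrow> (nat \<Rightarrow> nat set \<Rightarrow> bool)" where
  "pin_XA E A xi = (\<lambda>i\<in>A. pin_X E i xi)"

definition entropy2 :: "'a pmf \<Rightarrow> real" where
  "entropy2 p = - (\<Sum>x\<in>set_pmf p. pmf p x * log 2 (pmf p x))"

definition pin_H :: "nat set set \<Rightarrow> nat set \<Rightarrow> real" where
  "pin_H E A = entropy2 (map_pmf (pin_XA E A) (pin_bits E))"

definition pin_Delta :: "nat set \<Rightarrow> nat set set \<Rightarrow> nat set set \<Rightarrow> real" where
  "pin_Delta M E P = ((\<Sum>A\<in>P. pin_H E A) - pin_H E M) / (real (card P) - 1)"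

definition singleton_partition :: "nat set \<Rightarrow> nat set set" where
  "singleton_partition M = (\<lambda>i. {i}) ` M"

definition strict_type_S :: "nat set \<Rightarrow> nat set set \<Rightarrow> bool" where
  "strict_type_S M E \<longleftrightarrow>
     partition_on M (singleton_partition M) \<and> card (singleton_partition M) \<ge> 2 \<and>
     (\<forall>P. partition_on M P \<and> card P \<ge> 2 \<and> P \<noteq> singleton_partition M \<longrightarrow>
          pin_Delta M E (singleton_partition M) < pin_Delta M E P)"

end

theory Submission
  imports Defs "HOL-Probability.Product_PMF"
begin

lemma entropy_uniform:
  assumes "finite S" "S \<noteq> {}"
  shows "entropy2 (pmf_of_set S) = log 2 (card S)"
proof -
  have c: "card S > 0" using assms by (simp add: card_gt_0_iff)
  have "entropy2 (pmf_of_set S) = - (\<Sum>x\<in>S. (1 / card S) * log 2 (1 / card S))"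
    unfolding entropy2_def using assms by (simp add: pmf_of_set)
  also have "\<dots> = - (log 2 (1 / card S))" using c by simp
  also have "\<dots> = log 2 (card S)" using c by (simp add: log_divide)
  finally show ?thesis .
qed

lemma entropy_inj:
  assumes "inj_on g (set_pmf p)"
  shows "entropy2 (map_pmf g p) = entropy2 p"
proof -
  have "entropy2 (map_pmf g p) = - (\<Sum>x\<in>g ` set_pmf p. pmf (map_pmf g p) x * log 2 (pmf (map_pmf g p) x))"
    unfolding entropy2_def by simp
  also have "\<dots> = - (\<Sum>x\<in>set_pmf p. pmf (map_pmf g p) (g x) * log 2 (pmf (map_pmf g p) (g x)))"
    using assms by (simp add: sum.reindex)
  also have "\<dots> = - (\<Sum>x\<in>set_pmf p. pmf p x * log 2 (pmf p x))"
    using assms by (simp add: pmf_map_inj)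
  finally show ?thesis unfolding entropy2_def .
qed

lemma PiE_dflt_UNIV: "PiE X (\<lambda>_. UNIV) = PiE_dflt X undefined (\<lambda>_. UNIV)"
  by (auto simp: PiE_def PiE_dflt_def extensional_def)

lemma restrict_uniform:
  assumes "finite E" "F \<subseteq> E"
  shows "map_pmf (\<lambda>xi. restrict xi F) (pmf_of_set (PiE E (\<lambda>_. UNIV :: bool set)))
         = pmf_of_set (PiE F (\<lambda>_. UNIV))"
proof -
  have fF: "finite F" using assms finite_subset by blast
  have 1: "pmf_of_set (PiE X (\<lambda>_. UNIV :: bool set)) = Pi_pmf X undefined (\<lambda>_. pmf_of_set UNIV)"
    if "finite X" for X :: "'a set"
    unfolding PiE_dflt_UNIV using that by (subst Pi_pmf_of_set) auto
  have r: "(\<lambda>xi. restrict xi F) = (\<lambda>f x. if x \<in> F then f x else undefined)"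
    by (auto simp: restrict_def)
  show ?thesis
    unfolding 1[OF assms(1)] 1[OF fF] r
    by (rule Pi_pmf_subset[OF assms, symmetric])
qed

lemma pin_H_card:
  assumes "finite E"
  shows "pin_H E A = card {e\<in>E. e \<inter> A \<noteq> {}}"
proof -
  define F where "F = {e\<in>E. e \<inter> A \<noteq> {}}"
  have FE: "F \<subseteq> E" unfolding F_def by auto
  have fF: "finite F" using assms FE finite_subset by blast
  define g where "g = (\<lambda>h::nat set \<Rightarrow> bool. (\<lambda>i\<in>A. restrict h {e\<in>E. i\<in>e}))"
  have comp: "pin_XA E A = g \<circ> (\<lambda>xi. restrict xi F)"
    unfolding g_def pin_XA_def pin_X_def F_def
    by (rule ext) (auto simp: restrict_def fun_eq_iff)
  have ne: "PiE F (\<lambda>_. UNIV :: bool set) \<noteq> {}" by (simp add: PiE_eq_empty_iff)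
  have fin: "finite (PiE F (\<lambda>_. UNIV :: bool set))" using fF by (simp add: finite_PiE)
  have inj: "inj_on g (PiE F (\<lambda>_. UNIV))"
  proof (rule inj_onI)
    fix h1 h2 assume h1: "h1 \<in> PiE F (\<lambda>_. UNIV)" and h2: "h2 \<in> PiE F (\<lambda>_. UNIV)"
      and eq: "g h1 = g h2"
    show "h1 = h2"
    proof (rule PiE_ext[OF h1 h2])
      fix e assume "e \<in> F"
      then obtain i where i: "i \<in> A" "i \<in> e" "e \<in> E" unfolding F_def by auto
      have "g h1 i e = g h2 i e" using eq by simp
      then show "h1 e = h2 e" using i unfolding g_def by simp
    qed
  qed
  have "pin_H E A = entropy2 (map_pmf g (pmf_of_set (PiE F (\<lambda>_. UNIV))))"
    unfolding pin_H_def pin_bits_def comp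
    by (simp add: map_pmf_compose restrict_uniform[OF assms FE])
  also have "\<dots> = entropy2 (pmf_of_set (PiE F (\<lambda>_. UNIV :: bool set)))"
    by (rule entropy_inj) (use inj ne fin in simp)
  also have "\<dots> = log 2 (card (PiE F (\<lambda>_. UNIV :: bool set)))"
    by (rule entropy_uniform[OF fin ne])
  also have "card (PiE F (\<lambda>_. UNIV :: bool set)) = 2 ^ card F"
    using fF by (simp add: card_PiE)
  also have "log 2 (real (2 ^ card F)) = card F"
    by (simp add: log_nat_power)
  finally show ?thesis unfolding F_def .
qed

lemma card_le_mult_fibers:
  assumes "finite Y" "f ` X \<subseteq> Y" "\<And>y. y \<in> Y \<Longrightarrow> card {x\<in>X. f x = y} \<le> c"
  shows "card X \<le> c * card Y"
proof -
  have "X = (\<Union>y\<in>Y. {x\<in>X. f x = y})" using assms(2) by auto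
  then have "card X \<le> (\<Sum>y\<in>Y. card {x\<in>X. f x = y})"
    using card_UN_le[OF assms(1)] by metis
  also have "\<dots> \<le> (\<Sum>y\<in>Y. c)" by (rule sum_mono) (use assms(3) in auto)
  finally show ?thesis by (simp add: mult.commute)
qed

lemma card_eq_mult_fibers:
  assumes "finite X" "f ` X = Y" "\<And>y. y \<in> Y \<Longrightarrow> card {x\<in>X. f x = y} = c"
  shows "card X = c * card Y"
proof -
  have fY: "finite Y" using assms by blast
  have "X = (\<Union>y\<in>Y. {x\<in>X. f x = y})" using assms(2) by auto
  then have "card X = (\<Sum>y\<in>Y. card {x\<in>X. f x = y})"
    using card_UN_disjoint[OF fY, of "\<lambda>y. {x\<in>X. f x = y}"] assms(1) by auto
  also have "\<dots> = (\<Sum>y\<in>Y. c)" by (rule sum.cong) (use assms(3) in auto)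
  finally show ?thesis by (simp add: mult.commute)
qed

lemma sts_unique:
  assumes "is_STS M E" "p \<subseteq> M" "card p = 2"
  shows "\<exists>!e. e \<in> E \<and> p \<subseteq> e"
proof -
  obtain i j where "p = {i, j}" "i \<noteq> j" using assms(3) card_2_iff by metis
  then show ?thesis using assms(1,2) unfolding is_STS_def by auto
qed

definition tri :: "nat set set \<Rightarrow> nat set \<Rightarrow> nat set" where
  "tri E p = (THE e. e \<in> E \<and> p \<subseteq> e)"

lemma tri_props:
  assumes "is_STS M E" "p \<subseteq> M" "card p = 2"
  shows "tri E p \<in> E" "p \<subseteq> tri E p" "\<And>e. e \<in> E \<Longrightarrow> p \<subseteq> e \<Longrightarrow> tri E p = e"
proof -
  have u: "\<exists>!e. e \<in> E \<and> p \<subseteq> e" by (rule sts_unique[OF assms])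
  have "tri E p \<in> E \<and> p \<subseteq> tri E p" unfolding tri_def by (rule theI'[OF u])
  then show "tri E p \<in> E" "p \<subseteq> tri E p" by auto
  show "\<And>e. e \<in> E \<Longrightarrow> p \<subseteq> e \<Longrightarrow> tri E p = e"
    unfolding tri_def by (rule the1_equality[OF u]) simp
qed

lemma sts_finite: "is_STS M E \<Longrightarrow> finite M \<Longrightarrow> finite E"
  unfolding is_STS_def by (meson PowI finite_Pow_iff rev_finite_subset subsetI)

lemma t_exact:
  assumes S: "is_STS M E" and fM: "finite M" and x: "x \<in> M"
  shows "card M - 1 = 2 * card {e\<in>E. x\<in>e}"
proof -
  have im: "(\<lambda>y. tri E {x, y}) ` (M - {x}) = {e\<in>E. x\<in>e}"
  proof
    show "(\<lambda>y. tri E {x, y}) ` (M - {x}) \<subseteq> {e\<in>E. x\<in>e}"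
    proof
      fix e assume "e \<in> (\<lambda>y. tri E {x, y}) ` (M - {x})"
      then obtain y where y: "y \<in> M" "y \<noteq> x" "e = tri E {x,y}" by auto
      have "{x,y} \<subseteq> M" "card {x,y} = 2" using x y by auto
      then show "e \<in> {e\<in>E. x\<in>e}" using tri_props(1,2)[OF S, of "{x,y}"] y by auto
    qed
  next
    show "{e\<in>E. x\<in>e} \<subseteq> (\<lambda>y. tri E {x, y}) ` (M - {x})"
    proof
      fix e assume e: "e \<in> {e\<in>E. x\<in>e}"
      then have eM: "e \<subseteq> M" "card e = 3" using S unfolding is_STS_def by auto
      have "e - {x} \<noteq> {}"
      proof
        assume "e - {x} = {}"
        then have "e \<subseteq> {x}" by auto
        then have "card e \<le> 1" using card_mono[of "{x}" e] by simp
        then show False using eM by simp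
      qed
      then obtain y where y: "y \<in> e" "y \<noteq> x" by auto
      have "{x,y} \<subseteq> M" "card {x,y} = 2" using x y eM by auto
      then have "tri E {x,y} = e" using tri_props(3)[OF S] e y by auto
      then show "e \<in> (\<lambda>y. tri E {x, y}) ` (M - {x})" using y eM by force
    qed
  qed
  have fib: "card {y \<in> M - {x}. tri E {x, y} = e} = 2" if e: "e \<in> {e\<in>E. x\<in>e}" for e
  proof -
    have eM: "e \<subseteq> M" "card e = 3" using e S unfolding is_STS_def by auto
    have "{y \<in> M - {x}. tri E {x, y} = e} = e - {x}"
    proof (intro equalityI subsetI)
      fix y assume "y \<in> {y \<in> M - {x}. tri E {x, y} = e}"
      then have "y \<in> M" "y \<noteq> x" "tri E {x,y} = e" by auto
      then show "y \<in> e - {x}" using tri_props(2)[OF S, of "{x,y}"] x by auto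
    next
      fix y assume y: "y \<in> e - {x}"
      have "{x,y} \<subseteq> M" "card {x,y} = 2" using x y eM by auto
      then show "y \<in> {y \<in> M - {x}. tri E {x, y} = e}"
        using tri_props(3)[OF S] e y eM by auto
    qed
    also have "card \<dots> = 2" using eM e by (simp add: card_Diff_singleton)
    finally show ?thesis .
  qed
  have "card (M - {x}) = 2 * card {e\<in>E. x\<in>e}"
    by (rule card_eq_mult_fibers[OF _ im fib]) (use fM in auto)
  then show ?thesis using x fM by simp
qed

lemma double_count:
  assumes S: "is_STS M E" and fM: "finite M"
  shows "3 * card E = (\<Sum>x\<in>M. card {e\<in>E. x\<in>e})"
proof -
  have fE: "finite E" using sts_finite[OF S fM] .
  have "(\<Sum>x\<in>M. card {e\<in>E. x\<in>e}) = (\<Sum>x\<in>M. \<Sum>e\<in>E. if x \<in> e then 1 else 0)"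
    by (rule sum.cong) (use sum.inter_filter[OF fE, of "\<lambda>_. 1::nat"] in simp_all)
  also have "\<dots> = (\<Sum>e\<in>E. \<Sum>x\<in>M. if x \<in> e then 1 else 0)" by (rule sum.swap)
  also have "\<dots> = (\<Sum>e\<in>E. card {x\<in>M. x \<in> e})"
    by (rule sum.cong) (use sum.inter_filter[OF fM, of "\<lambda>_. 1::nat"] in simp_all)
  also have "\<dots> = (\<Sum>e\<in>E. 3)"
  proof (rule sum.cong)
    fix e assume "e \<in> E"
    then have "e \<subseteq> M" "card e = 3" using S unfolding is_STS_def by auto
    moreover have "{x\<in>M. x \<in> e} = e" using calculation by auto
    ultimately show "card {x\<in>M. x \<in> e} = 3" by simp
  qed simp
  finally show ?thesis by simp
qed

lemma two_choose: "2 * (n choose 2) = n * (n - 1)"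
proof (induct n)
  case (Suc n)
  then show ?case by (cases n) (auto simp: numeral_2_eq_2 algebra_simps)
qed simp

lemma pair_bound:
  assumes S: "is_STS M E" and fM: "finite M" and AM: "A \<subseteq> M"
  shows "card {p. p \<subseteq> M \<and> card p = 2} - card {p. p \<subseteq> M - A \<and> card p = 2}
         \<le> 3 * card {e\<in>E. e \<inter> A \<noteq> {}}"
proof -
  have fE: "finite E" using sts_finite[OF S fM] .
  define X where "X = {p. p \<subseteq> M \<and> card p = 2 \<and> p \<inter> A \<noteq> {}}"
  have "X = {p. p \<subseteq> M \<and> card p = 2} - {p. p \<subseteq> M - A \<and> card p = 2}"
    unfolding X_def by auto
  moreover have f1: "finite {p. p \<subseteq> M \<and> card p = 2}" using fM by simp
  moreover have s1: "{p. p \<subseteq> M - A \<and> card p = 2} \<subseteq> {p. p \<subseteq> M \<and> card p = 2}" by auto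
  ultimately have cX: "card X = card {p. p \<subseteq> M \<and> card p = 2} - card {p. p \<subseteq> M - A \<and> card p = 2}"
    using card_Diff_subset[OF finite_subset[OF s1 f1] s1] by simp
  have "card X \<le> 3 * card {e\<in>E. e \<inter> A \<noteq> {}}"
  proof (rule card_le_mult_fibers[where f = "tri E"])
    show "finite {e\<in>E. e \<inter> A \<noteq> {}}" using fE by simp
    show "tri E ` X \<subseteq> {e\<in>E. e \<inter> A \<noteq> {}}"
    proof
      fix e assume "e \<in> tri E ` X"
      then obtain p where p: "p \<subseteq> M" "card p = 2" "p \<inter> A \<noteq> {}" "e = tri E p"
        unfolding X_def by auto
      then show "e \<in> {e\<in>E. e \<inter> A \<noteq> {}}" using tri_props(1,2)[OF S p(1,2)] by auto
    qed
    fix e assume e: "e \<in> {e\<in>E. e \<inter> A \<noteq> {}}"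
    then have c3: "card e = 3" using S unfolding is_STS_def by auto
    then have fe: "finite e" by (intro card_ge_0_finite) simp
    have s1: "{p \<in> X. tri E p = e} \<subseteq> {p. p \<subseteq> e \<and> card p = 2}"
      unfolding X_def using tri_props(2)[OF S] by auto
    have c3': "card {p. p \<subseteq> e \<and> card p = 2} = 3"
      using n_subsets[OF fe, of 2] c3 by (simp add: choose_two)
    have f3: "finite {p. p \<subseteq> e \<and> card p = 2}"
    proof (rule finite_subset)
      show "{p. p \<subseteq> e \<and> card p = 2} \<subseteq> Pow e" by blast
      show "finite (Pow e)" using fe by simp
    qed
    show "card {p \<in> X. tri E p = e} \<le> 3" using card_mono[OF f3 s1] c3' by simp
  qed
  then show ?thesis using cX by simp
qed

lemma two_cells:
  assumes S: "is_STS M E" and fM: "finite M" and xy: "x \<in> M" "y \<in> M" "x \<noteq> y"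
  shows "card {e\<in>E. e \<inter> {x,y} \<noteq> {}} + 1 = card {e\<in>E. x\<in>e} + card {e\<in>E. y\<in>e}"
proof -
  have fE: "finite E" using sts_finite[OF S fM] .
  have p: "{x,y} \<subseteq> M" "card {x,y} = 2" using xy by auto
  have 1: "{e\<in>E. e \<inter> {x,y} \<noteq> {}} = {e\<in>E. x\<in>e} \<union> {e\<in>E. y\<in>e}" by auto
  have 2: "{e\<in>E. x\<in>e} \<inter> {e\<in>E. y\<in>e} = {tri E {x,y}}"
  proof (intro equalityI subsetI)
    fix e assume "e \<in> {e\<in>E. x\<in>e} \<inter> {e\<in>E. y\<in>e}"
    then have "e \<in> E" "{x,y} \<subseteq> e" by auto
    then have "tri E {x,y} = e" by (rule tri_props(3)[OF S p])
    then show "e \<in> {tri E {x,y}}" by simp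
  next
    fix e assume "e \<in> {tri E {x,y}}"
    then show "e \<in> {e\<in>E. x\<in>e} \<inter> {e\<in>E. y\<in>e}" using tri_props(1,2)[OF S p] by auto
  qed
  show ?thesis unfolding 1 using card_Un_Int[of "{e\<in>E. x\<in>e}" "{e\<in>E. y\<in>e}"] fE 2 by simp
qed

lemma choose2_real: "2 * real (n choose 2) = real n * (real n - 1)"
proof -
  have "real (2 * (n choose 2)) = real (n * (n - 1))" by (simp only: two_choose)
  then show ?thesis by (cases n) (auto simp: algebra_simps)
qed

lemma cell_bound:
  assumes S: "is_STS M E" and fM: "finite M" and m3: "card M > 3"
    and AM: "A \<subseteq> M" and Ane: "A \<noteq> {}" and AnM: "A \<noteq> M"
  shows "real (card M) / 3 + real (card A) * (real (card M) - 3) / 6 \<le> real (card {e\<in>E. e \<inter> A \<noteq> {}})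
         \<and> (2 \<le> card A \<longrightarrow> real (card M) / 3 + real (card A) * (real (card M) - 3) / 6 < real (card {e\<in>E. e \<inter> A \<noteq> {}}))"
proof -
  define m where "m = card M"
  define a where "a = card A"
  define T where "T = card {e\<in>E. e \<inter> A \<noteq> {}}"
  have fA: "finite A" using fM AM finite_subset by blast
  have a1: "a \<ge> 1" using fA Ane unfolding a_def by (simp add: Suc_leI card_gt_0_iff)
  have am: "a < m" unfolding a_def m_def using AM AnM fM by (simp add: psubset_card_mono psubsetI)
  consider "a = 1" | "a = 2" | "a \<ge> 3" using a1 by linarith
  then have "real m / 3 + real a * (real m - 3) / 6 \<le> real T \<and> (2 \<le> a \<longrightarrow> real m / 3 + real a * (real m - 3) / 6 < real T)"
  proof cases
    case 1
    have "\<exists>x. A = {x}" using 1 card_1_singleton_iff[of A] unfolding a_def by simp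
    then obtain x where x: "A = {x}" by blast
    then have xM: "x \<in> M" using AM by auto
    have "{e\<in>E. e \<inter> A \<noteq> {}} = {e\<in>E. x \<in> e}" using x by auto
    then have "m - 1 = 2 * T" using t_exact[OF S fM xM] unfolding T_def m_def by simp
    then have "real m - 1 = 2 * real T" using am by (metis of_nat_1 of_nat_diff of_nat_mult of_nat_numeral less_imp_le_nat 1)
    then show ?thesis using 1 by (simp add: field_simps)
  next
    case 2
    have "\<exists>x y. A = {x,y} \<and> x \<noteq> y" using 2 card_2_iff[of A] unfolding a_def by simp
    then obtain x y where xy: "A = {x,y}" "x \<noteq> y" by blast
    then have xM: "x \<in> M" "y \<in> M" using AM by auto
    have "T + 1 = card {e\<in>E. x\<in>e} + card {e\<in>E. y\<in>e}"
      using two_cells[OF S fM xM xy(2)] xy unfolding T_def by simp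
    moreover have "m - 1 = 2 * card {e\<in>E. x\<in>e}" "m - 1 = 2 * card {e\<in>E. y\<in>e}"
      using t_exact[OF S fM xM(1)] t_exact[OF S fM xM(2)] unfolding m_def by simp_all
    ultimately have "2 * T + 2 = 2 * (m - 1)" by linarith
    then have "2 * real T + 2 = 2 * (real m - 1)" using am
      by (metis (mono_tags, lifting) of_nat_1 of_nat_add of_nat_diff of_nat_mult of_nat_numeral less_imp_le_nat 2 one_le_numeral le_trans)
    then show ?thesis using 2 m3 unfolding m_def by (simp add: field_simps)
  next
    case 3
    have cMA: "card (M - A) = m - a" unfolding m_def a_def using AM fA by (simp add: card_Diff_subset)
    have pb: "(m choose 2) - ((m - a) choose 2) \<le> 3 * T"
      using pair_bound[OF S fM AM] n_subsets[OF fM, of 2] n_subsets[of "M - A" 2] fM cMA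
      unfolding T_def m_def by simp
    have "real (m choose 2) - real ((m - a) choose 2) \<le> real ((m choose 2) - ((m - a) choose 2))"
      by (cases "(m - a) choose 2 \<le> m choose 2") (auto simp: of_nat_diff)
    also have "\<dots> \<le> 3 * real T" using pb by (metis of_nat_le_iff of_nat_mult of_nat_numeral)
    finally have i1: "real (m choose 2) - real ((m - a) choose 2) \<le> 3 * real T" .
    have rma: "real (m - a) = real m - real a" using am by (simp add: of_nat_diff)
    have i2: "real m * (real m - 1) - (real m - real a) * (real m - real a - 1) \<le> 6 * real T"
      using i1 choose2_real[of m] choose2_real[of "m - a", unfolded rma] by linarith
    have pos: "(real a - 2) * (real m - real a) > 0" using 3 am by (simp add: mult_pos_pos)
    have "real m / 3 + real a * (real m - 3) / 6 < real T"
      using i2 pos by (simp add: algebra_simps field_simps) 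
    then show ?thesis by simp
  qed
  then show ?thesis unfolding m_def a_def T_def .
qed

theorem corollary5:
  fixes m :: nat and E :: "nat set set"
  assumes "m > 3" and "is_STS {1..m} E"
  shows "strict_type_S {1..m} E"
proof -
  define M where "M = {1..m}"
  have S: "is_STS M E" using assms(2) unfolding M_def .
  have fM: "finite M" and cM: "card M = m" unfolding M_def by auto
  have m3: "card M > 3" using cM assms(1) by simp
  have fE: "finite E" using sts_finite[OF S fM] .
  have H: "\<And>A. pin_H E A = real (card {e\<in>E. e \<inter> A \<noteq> {}})" using pin_H_card[OF fE] .
  have HM: "pin_H E M = real (card E)"
  proof -
    have "{e\<in>E. e \<inter> M \<noteq> {}} = E"
    proof (intro equalityI subsetI)
      fix e assume e: "e \<in> E"
      then have "e \<subseteq> M" "card e = 3" using S unfolding is_STS_def by auto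
      then have "e \<noteq> {}" "e \<inter> M = e" by auto
      then show "e \<in> {e\<in>E. e \<inter> M \<noteq> {}}" using e by simp
    qed auto
    then show ?thesis using H by simp
  qed
  define t where "t x = card {e\<in>E. x\<in>e}" for x
  have t2: "real m - 1 = 2 * real (t x)" if "x \<in> M" for x
  proof -
    have "m - 1 = 2 * t x" using t_exact[OF S fM that] cM unfolding t_def by simp
    then show ?thesis using assms(1) by (metis of_nat_1 of_nat_diff of_nat_mult of_nat_numeral
          less_imp_le_nat one_le_numeral le_trans numeral_le_iff semiring_norm(69) Suc_leI
          add_lessD1 less_trans zero_less_one)
  qed
  have sumt: "(\<Sum>x\<in>M. real (t x)) = real m * (real m - 1) / 2"
  proof -
    have "(\<Sum>x\<in>M. real (t x)) = (\<Sum>x\<in>M. (real m - 1) / 2)"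
      by (rule sum.cong) (use t2 in auto)
    then show ?thesis using cM by simp
  qed
  have N: "3 * real (card E) = real m * (real m - 1) / 2"
  proof -
    have "3 * card E = (\<Sum>x\<in>M. t x)" using double_count[OF S fM] unfolding t_def .
    then have "3 * real (card E) = (\<Sum>x\<in>M. real (t x))" by (metis of_nat_mult of_nat_numeral of_nat_sum)
    then show ?thesis using sumt by simp
  qed
  define sing where "sing = singleton_partition M"
  have inj: "inj_on (\<lambda>i. {i}) M" by (auto simp: inj_on_def)
  have csing: "card sing = m" unfolding sing_def singleton_partition_def
    using card_image[OF inj] cM by simp
  have psing: "partition_on M sing"
    unfolding sing_def singleton_partition_def
    by (rule partition_onI) (auto simp: disjnt_def)
  have Dsing: "pin_Delta M E sing = real m / 3"
  proof -
    have "(\<Sum>A\<in>sing. pin_H E A) = (\<Sum>x\<in>M. pin_H E {x})"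
      unfolding sing_def singleton_partition_def using sum.reindex[OF inj] by (simp add: o_def)
    also have "\<dots> = (\<Sum>x\<in>M. real (t x))"
    proof (rule sum.cong)
      fix x assume "x \<in> M"
      have "{e\<in>E. e \<inter> {x} \<noteq> {}} = {e\<in>E. x \<in> e}" by auto
      then show "pin_H E {x} = real (t x)" using H unfolding t_def by simp
    qed simp
    finally have ss: "(\<Sum>A\<in>sing. pin_H E A) = real m * (real m - 1) / 2" using sumt by simp
    have NE: "real (card E) = real m * (real m - 1) / 6" using N by simp
    have "pin_Delta M E sing = (real m * (real m - 1) / 2 - real m * (real m - 1) / 6) / (real m - 1)"
      unfolding pin_Delta_def csing HM NE ss by simp
    also have "\<dots> = real m / 3" using assms(1) by (simp add: field_simps)
    finally show ?thesis .
  qed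
  have main: "pin_Delta M E sing < pin_Delta M E P"
    if P: "partition_on M P" "card P \<ge> 2" "P \<noteq> sing" for P
  proof -
    define k where "k = card P"
    have fP: "finite P" using P(2) by (intro card_ge_0_finite) simp
    have cellM: "A \<subseteq> M" if "A \<in> P" for A using P(1) that unfolding partition_on_def by auto
    have cellne: "A \<noteq> {}" if "A \<in> P" for A using P(1) that unfolding partition_on_def by auto
    have cellnM: "A \<noteq> M" if A: "A \<in> P" for A
    proof
      assume AM: "A = M"
      have "P - {A} \<noteq> {}"
      proof
        assume "P - {A} = {}"
        then have "P \<subseteq> {A}" by auto
        then have "card P \<le> card {A}" by (intro card_mono) simp_all
        then have "card P \<le> 1" by simp
        then show False using P(2) by simp
      qed
      then obtain B where B: "B \<in> P" "B \<noteq> A" by auto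
      have "A \<inter> B = {}" using P(1) A B(1) B(2) unfolding partition_on_def disjoint_def by blast
      then have "B = {}" using cellM[OF B(1)] AM by blast
      then show False using cellne[OF B(1)] by simp
    qed
    have sumcard: "(\<Sum>A\<in>P. card A) = m"
    proof -
      have "card (\<Union>P) = sum card P"
      proof (rule card_Union_disjoint)
        show "pairwise disjnt P" using P(1) unfolding partition_on_def by simp
        fix A assume "A \<in> P" then show "finite A" using cellM fM finite_subset by blast
      qed
      then show ?thesis using P(1) cM unfolding partition_on_def by simp
    qed
    have ex2: "\<exists>A\<in>P. 2 \<le> card A"
    proof (rule ccontr)
      assume "\<not> ?thesis"
      then have lt2: "\<And>A. A \<in> P \<Longrightarrow> card A < 2" by auto
      have c1: "card A = 1" if A: "A \<in> P" for A
      proof -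
        have "finite A" using cellM[OF A] fM finite_subset by blast
        then have "card A > 0" using cellne[OF A] by (simp add: card_gt_0_iff)
        then show ?thesis using lt2[OF A] by simp
      qed
      have "P = sing"
      proof (intro equalityI subsetI)
        fix A assume A: "A \<in> P"
        have "\<exists>x. A = {x}" using c1[OF A] card_1_singleton_iff[of A] by simp
        then obtain x where "A = {x}" by blast
        then show "A \<in> sing" using cellM[OF A] unfolding sing_def singleton_partition_def by auto
      next
        fix A assume "A \<in> sing"
        then obtain x where x: "x \<in> M" "A = {x}" unfolding sing_def singleton_partition_def by auto
        then obtain B where B: "B \<in> P" "x \<in> B" using P(1) unfolding partition_on_def by auto
        have "\<exists>y. B = {y}" using c1[OF B(1)] card_1_singleton_iff[of B] by simp
        then obtain y where "B = {y}" by blast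
        then show "A \<in> P" using B x by auto
      qed
      then show False using P(3) by simp
    qed
    have "(\<Sum>A\<in>P. real m / 3 + real (card A) * (real m - 3) / 6) < (\<Sum>A\<in>P. pin_H E A)"
    proof (rule sum_strict_mono_ex1[OF fP])
      show "\<forall>A\<in>P. real m / 3 + real (card A) * (real m - 3) / 6 \<le> pin_H E A"
        using cell_bound[OF S fM m3] cellM cellne cellnM H cM by auto
      show "\<exists>A\<in>P. real m / 3 + real (card A) * (real m - 3) / 6 < pin_H E A"
        using ex2 cell_bound[OF S fM m3] cellM cellne cellnM H cM by metis
    qed
    also have "(\<Sum>A\<in>P. real m / 3 + real (card A) * (real m - 3) / 6)
        = real k * real m / 3 + real m * (real m - 3) / 6"
    proof -
      have "(\<Sum>A\<in>P. real (card A) * (real m - 3) / 6) = (\<Sum>A\<in>P. real (card A)) * (real m - 3) / 6"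
        by (simp add: sum_distrib_right sum_divide_distrib)
      also have "(\<Sum>A\<in>P. real (card A)) = real m" using sumcard by (metis of_nat_sum)
      finally show ?thesis unfolding k_def by (simp add: sum.distrib)
    qed
    finally have lt: "real k * real m / 3 + real m * (real m - 3) / 6 < (\<Sum>A\<in>P. pin_H E A)" .
    have k2: "real k - 1 > 0" using P(2) unfolding k_def by simp
    have "real m / 3 < ((\<Sum>A\<in>P. pin_H E A) - pin_H E M) / (real k - 1)"
      using lt N k2 HM by (simp add: field_simps)
    then show ?thesis unfolding pin_Delta_def k_def Dsing[unfolded pin_Delta_def] .
  qed
  show ?thesis
    unfolding strict_type_S_def M_def[symmetric] sing_def[symmetric]
    using psing csing assms(1) main by auto
qed

end
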